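(* Let $F$ be a continuous, order-preserving, and additively homogeneous self-map of $\mathbb{T}^n$. Then \[ \operatorname{cond}_{\mathbb{R}}(F) = |\underline{\mathrm{cw}}(F)|^{-1} \quad\text{and}\quad \operatorname{cond}(F) = |\overline{\mathrm{cw}}(F)|^{-1}, \] with the conventions $0^{-1}=+\infty$ and $(+\infty)^{-1}=0$.
   Context: $\mathbb{T} = \mathbb{R}\cup\{-\infty\}$ is the tropical (max-plus) semifield. $\mathbb{T}$ carries the topology of the metric $(a,b)\mapsto|e^a-e^b|$, and $\mathbb{T}^n$ carries the product topology. $\mathbb{T}^n$ is ordered entrywise, and $\mathbb{0}\in\mathbb{T}^n$ denotes the vector with all entries $-\infty$. For $\lambda\in\mathbb{T}$ and $x\in\mathbb{T}^n$, $\lambda+x$ is the vector with entries $\lambda+x_i$; for $u\in\mathbb{R}^n$, $u+F$ denotes the map $x\mapsto u+F(x)$ (entrywise addition). A self-map $F$ of $\mathbb{T}^n$ is order-preserving if $x\le y$ implies $F(x)\le F(y)$, and additively homogeneous if $F(\lambda+x)=\lambda+F(x)$ for all $\lambda\in\mathbb{T}$ and $x\in\mathbb{T}^n$. Notation: $y\ll z$ means $y_i<z_i$ for all $i$; $\|u\|_\infty=\max_i|u_i|$. Upper and lower Collatz–Wielandt numbers: $\overline{\mathrm{cw}}(F)=\inf\{\mu\in\mathbb{R}: \exists z\in\mathbb{R}^n,\ F(z)\le \mu+z\}$ and $\underline{\mathrm{cw}}(F)=\sup\{\mu\in\mathbb{R}: \exists z\in\mathbb{R}^n,\ F(z)\ge\mu+z\}$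 (with $\inf\emptyset=+\infty$, $\sup\emptyset=-\infty$). Feasibility problems: $\mathscr{P}(F)$ is the problem "does there exist $x\in\mathbb{T}^n$ with $x\ne\mathbb{0}$ and $x\le F(x)$?"; $\mathscr{P}_{\mathbb{R}}(F)$ is the problem "does there exist $x\in\mathbb{R}^n$ with $x\ll F(x)$?". A problem is feasible if such an $x$ exists, infeasible otherwise. Condition numbers: if $\mathscr{P}(F)$ is feasible, $\operatorname{cond}(F)=(\inf\{\|u\|_\infty: u\in\mathbb{R}^n,\ \mathscr{P}(u+F)\text{ infeasible}\})^{-1}$; if $\mathscr{P}(F)$ is infeasible, $\operatorname{cond}(F)=(\inf\{\|u\|_\infty: u\in\mathbb{R}^n,\ \mathscr{P}(u+F)\text{ feasible}\})^{-1}$, with $0^{-1}=+\infty$ and $(+\infty)^{-1}=0$ (infimum of the empty set is $+\infty$). $\operatorname{cond}_{\mathbb{R}}(F)$ is defined identically with $\mathscr{P}$ replaced by $\mathscr{P}_{\mathbb{R}}$. *)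

theory Defs
  imports "HOL-Analysis.Analysis"
begin

text \<open>The tropical semifield T = R \<union> {-\<infinity>} is modelled as the subset of ereal
  excluding \<infinity>. Its topology (metric |e^a - e^b|) coincides with the subspace
  topology of ereal.\<close>

definition trop_vecs :: "('n::finite \<Rightarrow> ereal) set" where
  "trop_vecs = {x. \<forall>i. x i \<noteq> \<infinity>}"

definition trop_zero :: "'n::finite \<Rightarrow> ereal" where
  "trop_zero = (\<lambda>i. -\<infinity>)"

definition trop_shift :: "ereal \<Rightarrow> ('n::finite \<Rightarrow> ereal) \<Rightarrow> ('n \<Rightarrow> ereal)" where
  "trop_shift l x = (\<lambda>i. l + x i)"

definition order_preserving :: "(('n::finite \<Rightarrow> ereal) \<Rightarrow> ('n \<Rightarrow> ereal)) \<Rightarrow> bool" where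
  "order_preserving F \<longleftrightarrow> (\<forall>x\<in>trop_vecs. \<forall>y\<in>trop_vecs. x \<le> y \<longrightarrow> F x \<le> F y)"

definition additively_homogeneous :: "(('n::finite \<Rightarrow> ereal) \<Rightarrow> ('n \<Rightarrow> ereal)) \<Rightarrow> bool" where
  "additively_homogeneous F \<longleftrightarrow>
     (\<forall>l. l \<noteq> \<infinity> \<longrightarrow> (\<forall>x\<in>trop_vecs. F (trop_shift l x) = trop_shift l (F x)))"

definition pert :: "('n::finite \<Rightarrow> real) \<Rightarrow> (('n \<Rightarrow> ereal) \<Rightarrow> ('n \<Rightarrow> ereal)) \<Rightarrow> (('n \<Rightarrow> ereal) \<Rightarrow> ('n \<Rightarrow> ereal))" where
  "pert u F = (\<lambda>x i. ereal (u i) + F x i)"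

definition sup_norm :: "('n::finite \<Rightarrow> real) \<Rightarrow> real" where
  "sup_norm u = Max (range (\<lambda>i. \<bar>u i\<bar>))"

definition upper_cw :: "(('n::finite \<Rightarrow> ereal) \<Rightarrow> ('n \<Rightarrow> ereal)) \<Rightarrow> ereal" where
  "upper_cw F = Inf {ereal \<mu> | \<mu>. \<exists>z::'n \<Rightarrow> real. \<forall>i. F (\<lambda>j. ereal (z j)) i \<le> ereal (\<mu> + z i)}"

definition lower_cw :: "(('n::finite \<Rightarrow> ereal) \<Rightarrow> ('n \<Rightarrow> ereal)) \<Rightarrow> ereal" where
  "lower_cw F = Sup {ereal \<mu> | \<mu>. \<exists>z::'n \<Rightarrow> real. \<forall>i. F (\<lambda>j. ereal (z j)) i \<ge> ereal (\<mu> + z i)}"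

definition feasible :: "(('n::finite \<Rightarrow> ereal) \<Rightarrow> ('n \<Rightarrow> ereal)) \<Rightarrow> bool" where
  "feasible F \<longleftrightarrow> (\<exists>x\<in>trop_vecs. x \<noteq> trop_zero \<and> x \<le> F x)"

definition feasible_R :: "(('n::finite \<Rightarrow> ereal) \<Rightarrow> ('n \<Rightarrow> ereal)) \<Rightarrow> bool" where
  "feasible_R F \<longleftrightarrow> (\<exists>x::'n \<Rightarrow> real. \<forall>i. ereal (x i) < F (\<lambda>j. ereal (x j)) i)"

text \<open>Condition number w.r.t. a feasibility predicate; values in [0,\<infinity>] as ereal,
  with inverse 0 = \<infinity>, inverse \<infinity> = 0, Inf {} = \<infinity>.\<close>
definition cond_gen :: "((('n::finite \<Rightarrow> ereal) \<Rightarrow> ('n \<Rightarrow> ereal)) \<Rightarrow> bool)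
    \<Rightarrow> (('n \<Rightarrow> ereal) \<Rightarrow> ('n \<Rightarrow> ereal)) \<Rightarrow> ereal" where
  "cond_gen P F =
     (if P F then inverse (Inf {ereal (sup_norm u) | u. \<not> P (pert u F)})
      else inverse (Inf {ereal (sup_norm u) | u. P (pert u F)}))"

definition cond :: "(('n::finite \<Rightarrow> ereal) \<Rightarrow> ('n \<Rightarrow> ereal)) \<Rightarrow> ereal" where
  "cond F = cond_gen feasible F"

definition cond_R :: "(('n::finite \<Rightarrow> ereal) \<Rightarrow> ('n \<Rightarrow> ereal)) \<Rightarrow> ereal" where
  "cond_R F = cond_gen feasible_R F"

end

theory Submission
  imports Defs
begin

lemma tendsto_fun_iff: "((f \<longlongrightarrow> (l::'a \<Rightarrow> 'b::topological_space)) F) \<longleftrightarrow> (\<forall>i. ((\<lambda>c. f c i) \<longlongrightarrow> l i) F)"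
proof -
  have "(f \<longlongrightarrow> l) F \<longleftrightarrow> limitin (product_topology (\<lambda>i. euclidean::'b topology) UNIV) f l F"
    unfolding euclidean_product_topology by simp
  also have "\<dots> \<longleftrightarrow> (\<forall>i. limitin euclidean (\<lambda>c. f c i) (l i) F)"
    unfolding limitin_componentwise by simp
  also have "\<dots> \<longleftrightarrow> (\<forall>i. ((\<lambda>c. f c i) \<longlongrightarrow> l i) F)" by simp
  finally show ?thesis .
qed

definition U :: "(('n::finite \<Rightarrow> ereal) \<Rightarrow> ('n \<Rightarrow> ereal)) \<Rightarrow> real set" where
  "U G = {\<mu>. \<exists>z::'n \<Rightarrow> real. \<forall>i. G (\<lambda>j. ereal (z j)) i \<le> ereal (\<mu> + z i)}"
definition L :: "(('n::finite \<Rightarrow> ereal) \<Rightarrow> ('n \<Rightarrow> ereal)) \<Rightarrow> real set" where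
  "L G = {\<mu>. \<exists>z::'n \<Rightarrow> real. \<forall>i. G (\<lambda>j. ereal (z j)) i \<ge> ereal (\<mu> + z i)}"

lemma upper_cw_U: "upper_cw G = Inf (ereal ` U G)"
  unfolding upper_cw_def U_def by (rule arg_cong[where f=Inf]) auto
lemma lower_cw_L: "lower_cw G = Sup (ereal ` L G)"
  unfolding lower_cw_def L_def by (rule arg_cong[where f=Sup]) auto

definition good :: "(('n::finite \<Rightarrow> ereal) \<Rightarrow> ('n \<Rightarrow> ereal)) \<Rightarrow> bool" where
  "good F \<longleftrightarrow> (\<forall>x\<in>trop_vecs. \<forall>i. F x i \<noteq> \<infinity>) \<and> order_preserving F \<and> additively_homogeneous F"

definition seqcont :: "(('n::finite \<Rightarrow> ereal) \<Rightarrow> ('n \<Rightarrow> ereal)) \<Rightarrow> bool" where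
  "seqcont F \<longleftrightarrow> (\<forall>X l. (\<forall>k. X k \<in> trop_vecs) \<longrightarrow> l \<in> trop_vecs \<longrightarrow> (\<forall>i. (\<lambda>k. X k i) \<longlonglongrightarrow> l i)
      \<longrightarrow> (\<forall>i. (\<lambda>k. F (X k) i) \<longlonglongrightarrow> F l i))"

lemma real_tv[simp]: "(\<lambda>j. ereal (z j)) \<in> trop_vecs"
  by (simp add: trop_vecs_def)

lemma good_fin: "good F \<Longrightarrow> x \<in> trop_vecs \<Longrightarrow> F x i \<noteq> \<infinity>"
  by (auto simp: good_def)
lemma good_mono: "good F \<Longrightarrow> x \<in> trop_vecs \<Longrightarrow> y \<in> trop_vecs \<Longrightarrow> x \<le> y \<Longrightarrow> F x \<le> F y"
  by (auto simp: good_def order_preserving_def)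
lemma good_hom: "good F \<Longrightarrow> x \<in> trop_vecs \<Longrightarrow> F (\<lambda>i. ereal c + x i) = (\<lambda>i. ereal c + F x i)"
  by (auto simp: good_def additively_homogeneous_def trop_shift_def)

lemma sn_ge: "\<bar>u i\<bar> \<le> sup_norm u"
  unfolding sup_norm_def by (rule Max_ge) auto
lemma sn_const: "sup_norm (\<lambda>_. c) = \<bar>c\<bar>"
  unfolding sup_norm_def by simp

lemma t1: fixes a :: ereal and u m c :: real assumes "a \<le> ereal m" "u \<le> c" shows "ereal u + a \<le> ereal (m + c)"
proof -
  have "ereal u + a \<le> ereal u + ereal m" using assms(1) by (rule add_left_mono)
  also have "\<dots> \<le> ereal (m + c)" using assms(2) by simp
  finally show ?thesis .
qed
lemma t2: fixes a :: ereal and u m c :: real assumes "ereal u + a \<le> ereal m" "-c \<le> u" shows "a \<le> ereal (m + c)"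
proof (cases a)
  case (real r) then show ?thesis using assms by simp
next
  case PInf then show ?thesis using assms by simp
next
  case MInf then show ?thesis by simp
qed
lemma t3: fixes a :: ereal and u m c :: real assumes "a \<ge> ereal m" "-c \<le> u" shows "ereal u + a \<ge> ereal (m - c)"
proof (cases a)
  case (real r) then show ?thesis using assms by simp
next
  case PInf then show ?thesis using assms by simp
next
  case MInf then show ?thesis using assms by simp
qed
lemma t4: fixes a :: ereal and u m c :: real assumes "ereal u + a \<ge> ereal m" "u \<le> c" shows "a \<ge> ereal (m - c)"
proof (cases a)
  case (real r) then show ?thesis using assms by simp
next
  case PInf then show ?thesis using assms by simp
next
  case MInf then show ?thesis using assms by simp
qed

lemma U_pert1: assumes "\<mu> \<in> U F" "\<And>i. u i \<le> c" shows "\<mu> + c \<in> U (pert u F)"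
proof -
  obtain z where z: "\<And>i. F (\<lambda>j. ereal (z j)) i \<le> ereal (\<mu> + z i)" using assms(1) by (auto simp: U_def)
  have "ereal (u i) + F (\<lambda>j. ereal (z j)) i \<le> ereal (\<mu> + c + z i)" for i
    using t1[OF z[of i] assms(2)[of i]] by (simp add: algebra_simps)
  then show ?thesis by (auto simp: U_def pert_def)
qed

lemma U_pert2: assumes "\<mu> \<in> U (pert u F)" "\<And>i. -c \<le> u i" shows "\<mu> + c \<in> U F"
proof -
  obtain z where z: "\<And>i. ereal (u i) + F (\<lambda>j. ereal (z j)) i \<le> ereal (\<mu> + z i)" using assms(1) by (auto simp: U_def pert_def)
  have "F (\<lambda>j. ereal (z j)) i \<le> ereal (\<mu> + c + z i)" for i
    using t2[OF z[of i] assms(2)[of i]] by (simp add: algebra_simps)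
  then show ?thesis by (auto simp: U_def)
qed


lemma L_pert1: assumes "\<mu> \<in> L F" "\<And>i. -c \<le> u i" shows "\<mu> - c \<in> L (pert u F)"
proof -
  obtain z where z: "\<And>i. F (\<lambda>j. ereal (z j)) i \<ge> ereal (\<mu> + z i)" using assms(1) by (auto simp: L_def)
  have "ereal (u i) + F (\<lambda>j. ereal (z j)) i \<ge> ereal (\<mu> - c + z i)" for i
    using t3[OF z[of i] assms(2)[of i]] by (simp add: algebra_simps)
  then show ?thesis by (auto simp: L_def pert_def)
qed

lemma L_pert2: assumes "\<mu> \<in> L (pert u F)" "\<And>i. u i \<le> c" shows "\<mu> - c \<in> L F"
proof -
  obtain z where z: "\<And>i. ereal (u i) + F (\<lambda>j. ereal (z j)) i \<ge> ereal (\<mu> + z i)" using assms(1) by (auto simp: L_def pert_def)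
  have "F (\<lambda>j. ereal (z j)) i \<ge> ereal (\<mu> - c + z i)" for i
    using t4[OF z[of i] assms(2)[of i]] by (simp add: algebra_simps)
  then show ?thesis by (auto simp: L_def)
qed

lemma feasR_iff:
  assumes "\<And>x i. G (\<lambda>j. ereal (x j)) i \<noteq> \<infinity>"
  shows "feasible_R G \<longleftrightarrow> (\<exists>\<mu>\<in>L G. \<mu> > 0)"
proof
  assume "feasible_R G"
  then obtain x where x: "\<And>i. ereal (x i) < G (\<lambda>j. ereal (x j)) i" by (auto simp: feasible_R_def)
  define m where "m = Min (range (\<lambda>i. real_of_ereal (G (\<lambda>j. ereal (x j)) i) - x i))"
  have e: "G (\<lambda>j. ereal (x j)) i = ereal (real_of_ereal (G (\<lambda>j. ereal (x j)) i))" for i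
    using x[of i] assms[of x i] by (cases "G (\<lambda>j. ereal (x j)) i") auto
  have pos: "real_of_ereal (G (\<lambda>j. ereal (x j)) i) - x i > 0" for i
  proof -
    have "ereal (x i) < ereal (real_of_ereal (G (\<lambda>j. ereal (x j)) i))" using x[of i] e[of i] by simp
    then show ?thesis by simp
  qed
  have "m \<in> range (\<lambda>i. real_of_ereal (G (\<lambda>j. ereal (x j)) i) - x i)"
    unfolding m_def by (rule Min_in) auto
  then obtain k where "m = real_of_ereal (G (\<lambda>j. ereal (x j)) k) - x k" by auto
  then have "m > 0" using pos by auto
  moreover have "m \<in> L G"
  proof -
    have "m \<le> real_of_ereal (G (\<lambda>j. ereal (x j)) i) - x i" for i unfolding m_def by (rule Min_le) auto
    then have "ereal (m + x i) \<le> G (\<lambda>j. ereal (x j)) i" for i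
      by (subst e) (simp add: algebra_simps)
    then show ?thesis by (auto simp: L_def)
  qed
  ultimately show "\<exists>\<mu>\<in>L G. \<mu> > 0" by blast
next
  assume "\<exists>\<mu>\<in>L G. \<mu> > 0"
  then obtain \<mu> z where "\<mu> > 0" "\<And>i. G (\<lambda>j. ereal (z j)) i \<ge> ereal (\<mu> + z i)" by (auto simp: L_def)
  then have "ereal (z i) < G (\<lambda>j. ereal (z j)) i" for i
  proof -
    have "ereal (z i) < ereal (\<mu> + z i)" using \<open>\<mu> > 0\<close> by simp
    then show ?thesis using \<open>\<And>i. G (\<lambda>j. ereal (z j)) i \<ge> ereal (\<mu> + z i)\<close>[of i] by (rule less_le_trans)
  qed
  then show "feasible_R G" by (auto simp: feasible_R_def)
qed

lemma good_pert: assumes "good F" shows "good (pert u F)"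
proof -
  have "\<forall>x\<in>trop_vecs. \<forall>i. pert u F x i \<noteq> \<infinity>" using good_fin[OF assms] by (simp add: pert_def)
  moreover have "order_preserving (pert u F)"
    unfolding order_preserving_def
  proof (intro ballI impI)
    fix x y :: "'a \<Rightarrow> ereal" assume "x \<in> trop_vecs" "y \<in> trop_vecs" "x \<le> y"
    then have "F x \<le> F y" by (rule good_mono[OF assms])
    then show "pert u F x \<le> pert u F y" by (auto simp: pert_def le_fun_def intro: add_left_mono)
  qed
  moreover have "additively_homogeneous (pert u F)"
    using assms unfolding additively_homogeneous_def good_def
    by (auto simp: pert_def trop_shift_def add.left_commute)
  ultimately show ?thesis by (simp add: good_def)
qed

lemma seqcont_pert: fixes F :: "('n::finite \<Rightarrow> ereal) \<Rightarrow> ('n \<Rightarrow> ereal)" assumes "seqcont F" shows "seqcont (pert u F)"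
  unfolding seqcont_def
proof (intro allI impI)
  fix X :: "nat \<Rightarrow> 'n \<Rightarrow> ereal" and l :: "'n \<Rightarrow> ereal" and i assume "\<forall>k. X k \<in> trop_vecs" "l \<in> trop_vecs" "\<forall>i. (\<lambda>k. X k i) \<longlonglongrightarrow> l i"
  then have "(\<lambda>k. F (X k) i) \<longlonglongrightarrow> F l i" using assms unfolding seqcont_def by blast
  then show "(\<lambda>k. pert u F (X k) i) \<longlonglongrightarrow> pert u F l i"
    unfolding pert_def by (intro tendsto_add_ereal_general tendsto_const) auto
qed

lemma cont_seqcont: fixes F :: "('n::finite \<Rightarrow> ereal) \<Rightarrow> ('n \<Rightarrow> ereal)" assumes "continuous_on trop_vecs F" shows "seqcont F"
  unfolding seqcont_def
proof (intro allI impI)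
  fix X :: "nat \<Rightarrow> 'n \<Rightarrow> ereal" and l :: "'n \<Rightarrow> ereal" and i assume X: "\<forall>k. X k \<in> trop_vecs" and l: "l \<in> trop_vecs" and c: "\<forall>i. (\<lambda>k. X k i) \<longlonglongrightarrow> l i"
  have "X \<longlonglongrightarrow> l" using c by (simp add: tendsto_fun_iff)
  then have "(\<lambda>k. F (X k)) \<longlonglongrightarrow> F l"
    by (rule continuous_on_tendsto_compose[OF assms _ l]) (use X in auto)
  then show "(\<lambda>k. F (X k) i) \<longlonglongrightarrow> F l i" by (simp add: tendsto_fun_iff)
qed

definition B0 :: "(('n::finite \<Rightarrow> ereal) \<Rightarrow> ('n \<Rightarrow> ereal)) \<Rightarrow> real" where
  "B0 F = Max (range (\<lambda>i. real_of_ereal (F (\<lambda>_. ereal 0) i)))"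

lemma U_nonempty: assumes "good F" shows "B0 F \<in> U F"
proof -
  have "F (\<lambda>j. ereal 0) i \<le> ereal (B0 F + 0)" for i
  proof -
    have le: "real_of_ereal (F (\<lambda>_. ereal 0) i) \<le> B0 F" unfolding B0_def by (rule Max_ge) auto
    have "F (\<lambda>_. ereal 0) i \<noteq> \<infinity>" using good_fin[OF assms, of "\<lambda>_. ereal 0"] by simp
    then show ?thesis using le by (cases "F (\<lambda>_. ereal 0) i") auto
  qed
  then show ?thesis unfolding U_def by (intro CollectI exI[of _ "\<lambda>_. 0"]) simp
qed

lemma L_bounded: assumes "good F" "\<mu> \<in> L F" shows "\<mu> \<le> B0 F"
proof -
  obtain z where z: "\<And>i. F (\<lambda>j. ereal (z j)) i \<ge> ereal (\<mu> + z i)" using assms(2) by (auto simp: L_def)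
  have "Max (range z) \<in> range z" by (rule Max_in) auto
  then obtain k where k: "z k = Max (range z)" by (metis (no_types, lifting) imageE)
  have zle: "(\<lambda>j. ereal (z j)) \<le> (\<lambda>j. ereal (z k) + ereal 0)"
    by (auto simp: le_fun_def k)
  have "F (\<lambda>j. ereal (z j)) \<le> F (\<lambda>j. ereal (z k) + ereal 0)"
    by (rule good_mono[OF assms(1) _ _ zle]) (auto simp: trop_vecs_def)
  also have "\<dots> = (\<lambda>j. ereal (z k) + F (\<lambda>_. ereal 0) j)"
    by (rule good_hom[OF assms(1)]) (simp add: trop_vecs_def)
  finally have "ereal (\<mu> + z k) \<le> ereal (z k) + F (\<lambda>_. ereal 0) k"
    using z[of k] by (auto simp: le_fun_def intro: order_trans)
  moreover have le: "real_of_ereal (F (\<lambda>_. ereal 0) k) \<le> B0 F" unfolding B0_def by (rule Max_ge) auto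
  moreover have "F (\<lambda>_. ereal 0) k \<noteq> \<infinity>" using good_fin[OF assms(1), of "\<lambda>_. ereal 0"] by simp
  ultimately show ?thesis by (cases "F (\<lambda>_. ereal 0) k") auto
qed

lemma easy: assumes g: "good F" and f: "feasible F" and m: "\<mu> \<in> U F" shows "0 \<le> \<mu>"
proof -
  obtain x where x: "x \<in> trop_vecs" "x \<noteq> trop_zero" "x \<le> F x" using f by (auto simp: feasible_def)
  obtain z where z: "\<And>i. F (\<lambda>j. ereal (z j)) i \<le> ereal (\<mu> + z i)" using m by (auto simp: U_def)
  define I where "I = {i. x i \<noteq> -\<infinity>}"
  have "I \<noteq> {}" using x(2) by (auto simp: I_def trop_zero_def fun_eq_iff)
  define c where "c = Max ((\<lambda>i. real_of_ereal (x i) - z i) ` I)"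
  have "c \<in> (\<lambda>i. real_of_ereal (x i) - z i) ` I" unfolding c_def using \<open>I \<noteq> {}\<close> by (intro Max_in) auto
  then obtain k where k: "k \<in> I" "c = real_of_ereal (x k) - z k" by auto
  have xfin: "x i \<noteq> \<infinity>" for i using x(1) by (auto simp: trop_vecs_def)
  have xk: "x k = ereal (c + z k)" using k xfin[of k] by (cases "x k") (auto simp: I_def)
  have xle: "x \<le> (\<lambda>i. ereal c + ereal (z i))"
  proof (rule le_funI)
    fix i show "x i \<le> ereal c + ereal (z i)"
    proof (cases "i \<in> I")
      case True
      have "real_of_ereal (x i) - z i \<le> c" unfolding c_def using True by (intro Max_ge) auto
      then show ?thesis using True xfin[of i] by (cases "x i") (auto simp: I_def)
    next
      case False then show ?thesis by (simp add: I_def)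
    qed
  qed
  have "F x \<le> F (\<lambda>i. ereal c + ereal (z i))"
    by (rule good_mono[OF g x(1) _ xle]) (simp add: trop_vecs_def)
  also have "\<dots> = (\<lambda>i. ereal c + F (\<lambda>j. ereal (z j)) i)" by (rule good_hom[OF g]) simp
  finally have "x k \<le> ereal c + F (\<lambda>j. ereal (z j)) k" using x(3) by (auto simp: le_fun_def intro: order_trans)
  also have "\<dots> \<le> ereal c + ereal (\<mu> + z k)" using z[of k] by (rule add_left_mono)
  finally show ?thesis using xk by simp
qed

lemma hard:
  fixes F :: "('n::finite \<Rightarrow> ereal) \<Rightarrow> ('n \<Rightarrow> ereal)"
  assumes g: "good F" and sc: "seqcont F" and nf: "\<not> feasible F"
  shows "\<exists>\<mu>\<in>U F. \<mu> < 0"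
proof -
  define H where "H x = (\<lambda>i. min (max (F x i) (x i + ereal (-1))) (x i))" for x :: "'n \<Rightarrow> ereal"
  define y where "y k = (H ^^ k) (\<lambda>_. 0)" for k
  have y0: "y 0 = (\<lambda>_. 0)" by (simp add: y_def)
  have ySuc: "y (Suc k) i = min (max (F (y k) i) (y k i + ereal (-1))) (y k i)" for k i
    by (simp add: y_def H_def)
  have yfin: "\<forall>i. \<bar>y k i\<bar> \<noteq> \<infinity>" for k
  proof (induction k)
    case 0 then show ?case by (simp add: y0)
  next
    case (Suc k)
    have tv: "y k \<in> trop_vecs" unfolding trop_vecs_def
    proof (intro CollectI allI)
      fix i from Suc have "\<bar>y k i\<bar> \<noteq> \<infinity>" by auto
      then show "y k i \<noteq> \<infinity>" by (cases "y k i") auto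
    qed
    show ?case
    proof
      fix i
      have a: "F (y k) i \<noteq> \<infinity>" using good_fin[OF g tv] by auto
      from Suc have b: "\<bar>y k i\<bar> \<noteq> \<infinity>" by auto
      then obtain r where r: "y k i = ereal r" by (cases "y k i") auto
      show "\<bar>y (Suc k) i\<bar> \<noteq> \<infinity>" using a unfolding ySuc r
        by (cases "F (y k) i") (auto simp: min_def max_def)
    qed
  qed
  define yr where "yr k i = real_of_ereal (y k i)" for k i
  have y_yr: "y k i = ereal (yr k i)" for k i using yfin[of k] by (auto simp: yr_def ereal_real')
  have ytv: "y k \<in> trop_vecs" for k by (simp add: trop_vecs_def y_yr)
  have decs: "decseq (\<lambda>k. y k i)" for i
    by (rule decseq_SucI) (simp add: ySuc)
  define yl where "yl i = (INF k. y k i)" for i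
  have lim: "(\<lambda>k. y k i) \<longlonglongrightarrow> yl i" for i using LIMSEQ_INF[OF decs] unfolding yl_def .
  have yl_le: "yl i \<le> 0" for i unfolding yl_def using INF_lower[of 0 UNIV "\<lambda>k. y k i"] by (simp add: y0)
  have yltv: "yl \<in> trop_vecs" unfolding trop_vecs_def
  proof (intro CollectI allI)
    fix i show "yl i \<noteq> \<infinity>" using yl_le[of i] by auto
  qed
  have limF: "(\<lambda>k. F (y k) i) \<longlonglongrightarrow> F yl i" for i
    using sc ytv yltv lim unfolding seqcont_def by blast
  have lim2: "(\<lambda>k. y (Suc k) i) \<longlonglongrightarrow> min (max (F yl i) (yl i + ereal (-1))) (yl i)" for i
    unfolding ySuc
    by (intro tendsto_min tendsto_max tendsto_add_ereal_general limF lim tendsto_const) auto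
  have lim3: "(\<lambda>k. y (Suc k) i) \<longlonglongrightarrow> yl i" for i using lim[of i] by (rule LIMSEQ_Suc)
  have eq: "yl i = min (max (F yl i) (yl i + ereal (-1))) (yl i)" for i
    using LIMSEQ_unique[OF lim3 lim2] .
  have le: "yl \<le> F yl"
  proof (rule le_funI)
    fix i
    have e: "yl i \<le> max (F yl i) (yl i + ereal (-1))" using eq[of i] by (metis min.absorb_iff2)
    show "yl i \<le> F yl i"
    proof (cases "yl i")
      case (real r)
      then show ?thesis using e by (auto simp: max_def split: if_splits)
    next
      case PInf then show ?thesis using yl_le[of i] by simp
    next
      case MInf then show ?thesis by simp
    qed
  qed
  have "yl = trop_zero" using nf le yltv unfolding feasible_def by auto
  then have "\<forall>i. \<exists>k. y k i < ereal (-1)"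
  proof (intro allI)
    fix i assume "yl = trop_zero"
    then have "(INF k. y k i) < ereal (-1)" unfolding trop_zero_def yl_def fun_eq_iff by auto
    then show "\<exists>k. y k i < ereal (-1)" unfolding INF_less_iff by auto
  qed
  then obtain kf where kf: "\<And>i. y (kf i) i < ereal (-1)" by metis
  define K where "K = Max (range kf)"
  have yK: "yr K i < -1" for i
  proof -
    have "kf i \<le> K" unfolding K_def by (rule Max_ge) auto
    then have "y K i \<le> y (kf i) i" using decs[of i] by (simp add: decseq_def)
    then show ?thesis using kf[of i] by (simp add: y_yr)
  qed
  define \<epsilon> where "\<epsilon> = 1 / (2 * (real K + 1))"
  have \<epsilon>pos: "\<epsilon> > 0" by (simp add: \<epsilon>_def)
  have K\<epsilon>: "real K * \<epsilon> < 1" by (simp add: \<epsilon>_def field_simps)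
  define z where "z i = Min ((\<lambda>j. yr j i + real j * \<epsilon>) ` {0..K})" for i
  have zle: "z i \<le> yr j i + real j * \<epsilon>" if "j \<le> K" for i j
    unfolding z_def using that by (intro Min_le) auto
  have key: "F (\<lambda>j. ereal (z j)) i \<le> ereal (-\<epsilon> + z i)" for i
  proof -
    have "z i \<in> (\<lambda>j. yr j i + real j * \<epsilon>) ` {0..K}" unfolding z_def by (intro Min_in) auto
    then obtain j where j: "j \<le> K" "z i = yr j i + real j * \<epsilon>" by auto
    have "j \<noteq> 0"
    proof
      assume "j = 0"
      then have "z i = 0" using j y0 by (simp add: yr_def)
      moreover have "z i \<le> yr K i + real K * \<epsilon>" by (rule zle) simp
      ultimately show False using yK[of i] K\<epsilon> by linarith
    qed
    then obtain j' where jj: "j = Suc j'" by (cases j) auto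
    have "z i \<le> yr j' i + real j' * \<epsilon>" using zle[of j' i] j jj by simp
    then have lt: "yr (Suc j') i < yr j' i" using j jj \<epsilon>pos by (simp add: algebra_simps)
    have Fle: "F (y j') i \<le> ereal (yr (Suc j') i)"
    proof -
      have h: "y (Suc j') i = min (max (F (y j') i) (y j' i + ereal (-1))) (y j' i)" by (rule ySuc)
      have "y (Suc j') i < y j' i" using lt by (simp add: y_yr)
      then have "F (y j') i \<le> y (Suc j') i" using h by (auto simp: min_def max_def split: if_splits)
      then show ?thesis by (simp add: y_yr)
    qed
    have zle2: "(\<lambda>m. ereal (z m)) \<le> (\<lambda>m. ereal (real j' * \<epsilon>) + y j' m)"
    proof (rule le_funI)
      fix m have "z m \<le> yr j' m + real j' * \<epsilon>" using zle[of j' m] j jj by simp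
      then show "ereal (z m) \<le> ereal (real j' * \<epsilon>) + y j' m" by (simp add: y_yr algebra_simps)
    qed
    have "F (\<lambda>m. ereal (z m)) \<le> F (\<lambda>m. ereal (real j' * \<epsilon>) + y j' m)"
      by (rule good_mono[OF g _ _ zle2]) (simp_all add: trop_vecs_def y_yr)
    also have "\<dots> = (\<lambda>m. ereal (real j' * \<epsilon>) + F (y j') m)" by (rule good_hom[OF g ytv])
    finally have "F (\<lambda>m. ereal (z m)) i \<le> ereal (real j' * \<epsilon>) + F (y j') i" by (simp add: le_fun_def)
    also have "\<dots> \<le> ereal (real j' * \<epsilon>) + ereal (yr (Suc j') i)" using Fle by (rule add_left_mono)
    also have "\<dots> = ereal (-\<epsilon> + z i)" using j jj by (simp add: algebra_simps)
    finally show ?thesis .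
  qed
  have "-\<epsilon> \<in> U F" unfolding U_def using key by blast
  then show ?thesis using \<epsilon>pos by force
qed

lemma sn_le1: "u i \<le> sup_norm u" using sn_ge[of u i] by linarith
lemma sn_le2: "- sup_norm u \<le> u i" using sn_ge[of u i] by linarith

lemma feas_iff: "good F \<Longrightarrow> seqcont F \<Longrightarrow> feasible F \<longleftrightarrow> (\<forall>\<mu>\<in>U F. 0 \<le> \<mu>)"
  using easy hard by force

lemma condR_part:
  fixes F :: "('n::finite \<Rightarrow> ereal) \<Rightarrow> ('n \<Rightarrow> ereal)"
  assumes g: "good F"
  shows "cond_R F = inverse \<bar>lower_cw F\<bar>"
proof -
  have fR: "feasible_R (pert u F) \<longleftrightarrow> (\<exists>\<mu>\<in>L (pert u F). \<mu> > 0)" for u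
    by (rule feasR_iff) (use good_fin[OF good_pert[OF g]] in simp)
  have fR0: "feasible_R F \<longleftrightarrow> (\<exists>\<mu>\<in>L F. \<mu> > 0)"
    by (rule feasR_iff) (use good_fin[OF g] in simp)
  have lc: "lower_cw F = Sup (ereal ` L F)" by (rule lower_cw_L)
  have nrm1: "u i \<le> sup_norm u" "- sup_norm u \<le> u i" for u :: "'n \<Rightarrow> real" and i
    using sn_ge[of u i] by auto
  show ?thesis
  proof (cases "feasible_R F")
    case True
    then obtain \<mu>0 where \<mu>0: "\<mu>0 \<in> L F" "\<mu>0 > 0" using fR0 by auto
    have up: "Sup (ereal ` L F) \<le> ereal (B0 F)" using L_bounded[OF g] by (auto intro: Sup_least)
    have lo: "ereal \<mu>0 \<le> Sup (ereal ` L F)" using \<mu>0 by (auto intro: Sup_upper)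
    obtain r where r: "Sup (ereal ` L F) = ereal r" using up lo by (cases "Sup (ereal ` L F)") auto
    have rpos: "r > 0" using lo r \<mu>0 by auto
    define S where "S = {ereal (sup_norm u) | u. \<not> feasible_R (pert u F)}"
    have "Inf S = ereal r"
    proof (rule antisym)
      have "\<not> feasible_R (pert (\<lambda>_. -r) F)"
      proof
        assume "feasible_R (pert (\<lambda>_. -r) F)"
        then obtain \<mu> where "\<mu> \<in> L (pert (\<lambda>_. -r) F)" "\<mu> > 0" using fR by blast
        then have "\<mu> - (-r) \<in> L F" by (intro L_pert2) auto
        then have "ereal (\<mu> + r) \<le> ereal r" unfolding r[symmetric] by (auto intro: Sup_upper)
        then show False using \<open>\<mu> > 0\<close> by simp
      qed
      then have "ereal r \<in> S" unfolding S_def using sn_const[of "-r", where 'a='n] rpos by (intro CollectI exI[of _ "\<lambda>_. -r"]) auto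
      then show "Inf S \<le> ereal r" by (rule Inf_lower)
    next
      show "ereal r \<le> Inf S" unfolding S_def
      proof (rule Inf_greatest, clarify)
        fix u :: "'n \<Rightarrow> real" assume nf: "\<not> feasible_R (pert u F)"
        show "ereal r \<le> ereal (sup_norm u)"
        proof (rule ccontr)
          assume "\<not> ?thesis"
          then have "ereal (sup_norm u) < Sup (ereal ` L F)" using r by auto
          then obtain \<mu> where \<mu>: "\<mu> \<in> L F" "sup_norm u < \<mu>" unfolding less_Sup_iff by auto
          have "\<mu> - sup_norm u \<in> L (pert u F)" by (rule L_pert1[OF \<mu>(1)]) (simp add: sn_le1 sn_le2)
          then have "feasible_R (pert u F)" using fR \<mu> by force
          then show False using nf by simp
        qed
      qed
    qed
    then show ?thesis using True r rpos
      by (simp add: cond_R_def cond_gen_def S_def lc)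
  next
    case False
    then have nonpos: "\<And>\<mu>. \<mu> \<in> L F \<Longrightarrow> \<mu> \<le> 0" using fR0 by force
    define S where "S = {ereal (sup_norm u) | u. feasible_R (pert u F)}"
    show ?thesis
    proof (cases "L F = {}")
      case True
      have "S = {}"
      proof -
        have "\<not> feasible_R (pert u F)" for u
        proof
          assume "feasible_R (pert u F)"
          then obtain \<mu> where "\<mu> \<in> L (pert u F)" using fR by blast
          then have "\<mu> - sup_norm u \<in> L F" by (rule L_pert2) (simp add: sn_le1 sn_le2)
          then show False using True by simp
        qed
        then show ?thesis unfolding S_def by simp
      qed
      then show ?thesis using False True by (simp add: cond_R_def cond_gen_def S_def[symmetric] lc top_ereal_def bot_ereal_def)
    next
      case ne: False
      then obtain \<mu>1 where \<mu>1: "\<mu>1 \<in> L F" by auto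
      have up: "Sup (ereal ` L F) \<le> 0" using nonpos by (auto intro: Sup_least)
      have lo: "ereal \<mu>1 \<le> Sup (ereal ` L F)" using \<mu>1 by (auto intro: Sup_upper)
      obtain r where r: "Sup (ereal ` L F) = ereal r" using up lo by (cases "Sup (ereal ` L F)") auto
      have rle: "r \<le> 0" using up r by simp
      have "Inf S = ereal (-r)"
      proof (rule antisym)
        show "Inf S \<le> ereal (-r)"
        proof (rule ereal_le_epsilon2)
          fix e :: real assume e: "0 < e"
          have "ereal (r - e) < Sup (ereal ` L F)" using r e by simp
          then obtain \<mu> where \<mu>: "\<mu> \<in> L F" "r - e < \<mu>" unfolding less_Sup_iff by auto
          then have "\<mu> - (r - e) \<in> L (pert (\<lambda>_. -r + e) F)" by (intro L_pert1) auto
          then have "feasible_R (pert (\<lambda>_. -r + e) F)" using fR \<mu> by force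
          then have "ereal (-r + e) \<in> S" unfolding S_def using sn_const[of "-r + e", where 'a='n] rle e by (intro CollectI exI[of _ "\<lambda>_. -r + e"]) auto
          then have "Inf S \<le> ereal (-r + e)" by (rule Inf_lower)
          then show "Inf S \<le> ereal (-r) + ereal e" by simp
        qed
      next
        show "ereal (-r) \<le> Inf S" unfolding S_def
        proof (rule Inf_greatest, clarify)
          fix u :: "'n \<Rightarrow> real" assume f: "feasible_R (pert u F)"
          then obtain \<mu> where \<mu>: "\<mu> \<in> L (pert u F)" "\<mu> > 0" using fR by blast
          have "\<mu> - sup_norm u \<in> L F" by (rule L_pert2[OF \<mu>(1)]) (simp add: sn_le1 sn_le2)
          then have "ereal (\<mu> - sup_norm u) \<le> ereal r" unfolding r[symmetric] by (auto intro: Sup_upper)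
          then show "ereal (-r) \<le> ereal (sup_norm u)" using \<mu> by simp
        qed
      qed
      then show ?thesis using False r rle
        by (simp add: cond_R_def cond_gen_def S_def[symmetric] lc)
    qed
  qed
qed

lemma cond_part:
  fixes F :: "('n::finite \<Rightarrow> ereal) \<Rightarrow> ('n \<Rightarrow> ereal)"
  assumes g: "good F" and sc: "seqcont F"
  shows "cond F = inverse \<bar>upper_cw F\<bar>"
proof -
  have fP: "feasible (pert u F) \<longleftrightarrow> (\<forall>\<mu>\<in>U (pert u F). 0 \<le> \<mu>)" for u
    by (rule feas_iff[OF good_pert[OF g] seqcont_pert[OF sc]])
  have fP0: "feasible F \<longleftrightarrow> (\<forall>\<mu>\<in>U F. 0 \<le> \<mu>)" by (rule feas_iff[OF g sc])
  have uc: "upper_cw F = Inf (ereal ` U F)" by (rule upper_cw_U)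
  have B: "B0 F \<in> U F" by (rule U_nonempty[OF g])
  show ?thesis
  proof (cases "feasible F")
    case True
    then have nn: "\<And>\<mu>. \<mu> \<in> U F \<Longrightarrow> 0 \<le> \<mu>" using fP0 by blast
    have lo: "0 \<le> Inf (ereal ` U F)" using nn by (auto intro: Inf_greatest)
    have up: "Inf (ereal ` U F) \<le> ereal (B0 F)" using B by (auto intro: Inf_lower)
    obtain r where r: "Inf (ereal ` U F) = ereal r" using up lo by (cases "Inf (ereal ` U F)") auto
    have rnn: "0 \<le> r" using lo r by simp
    define S where "S = {ereal (sup_norm u) | u. \<not> feasible (pert u F)}"
    have "Inf S = ereal r"
    proof (rule antisym)
      show "Inf S \<le> ereal r"
      proof (rule ereal_le_epsilon2)
        fix e :: real assume e: "0 < e"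
        have "Inf (ereal ` U F) < ereal (r + e)" using r e by simp
        then obtain \<mu> where \<mu>: "\<mu> \<in> U F" "\<mu> < r + e" unfolding Inf_less_iff by auto
        have "\<mu> + (-(r+e)) \<in> U (pert (\<lambda>_. -(r+e)) F)" by (rule U_pert1[OF \<mu>(1)]) simp
        then have "\<not> feasible (pert (\<lambda>_. -(r+e)) F)" using fP \<mu>(2) by force
        then have "ereal (r + e) \<in> S" unfolding S_def using sn_const[of "-(r+e)", where 'a='n] rnn e
          by (intro CollectI exI[of _ "\<lambda>_. -(r+e)"]) auto
        then have "Inf S \<le> ereal (r + e)" by (rule Inf_lower)
        then show "Inf S \<le> ereal r + ereal e" by simp
      qed
    next
      show "ereal r \<le> Inf S" unfolding S_def
      proof (rule Inf_greatest, clarify)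
        fix u :: "'n \<Rightarrow> real" assume nf: "\<not> feasible (pert u F)"
        then obtain \<mu> where \<mu>: "\<mu> \<in> U (pert u F)" "\<mu> < 0" using fP by force
        have "\<mu> + sup_norm u \<in> U F" by (rule U_pert2[OF \<mu>(1)]) (simp add: sn_le1 sn_le2)
        then have "ereal r \<le> ereal (\<mu> + sup_norm u)" unfolding r[symmetric] by (auto intro: Inf_lower)
        then show "ereal r \<le> ereal (sup_norm u)" using \<mu> by simp
      qed
    qed
    then show ?thesis using True r rnn by (simp add: cond_def cond_gen_def S_def uc)
  next
    case False
    then obtain \<mu>0 where \<mu>0: "\<mu>0 \<in> U F" "\<mu>0 < 0" using fP0 by force
    define S where "S = {ereal (sup_norm u) | u. feasible (pert u F)}"
    show ?thesis
    proof (cases "Inf (ereal ` U F) = -\<infinity>")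
      case True
      have "S = {}"
      proof -
        have "\<not> feasible (pert u F)" for u
        proof
          assume f: "feasible (pert u F)"
          have "Inf (ereal ` U F) < ereal (- sup_norm u - 1)" using True by simp
          then obtain \<mu> where \<mu>: "\<mu> \<in> U F" "\<mu> < - sup_norm u - 1" unfolding Inf_less_iff by auto
          have "\<mu> + sup_norm u \<in> U (pert u F)" by (rule U_pert1[OF \<mu>(1)]) (simp add: sn_le1)
          then show False using f fP \<mu>(2) by force
        qed
        then show ?thesis unfolding S_def by simp
      qed
      then show ?thesis using False True by (simp add: cond_def cond_gen_def S_def[symmetric] uc top_ereal_def)
    next
      case nb: False
      have up: "Inf (ereal ` U F) \<le> ereal \<mu>0" using \<mu>0 by (auto intro: Inf_lower)
      obtain r where r: "Inf (ereal ` U F) = ereal r" using up nb by (cases "Inf (ereal ` U F)") auto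
      have rneg: "r < 0" using up r \<mu>0 by simp
      have "Inf S = ereal (-r)"
      proof (rule antisym)
        have "feasible (pert (\<lambda>_. -r) F)" unfolding fP
        proof
          fix \<mu> assume "\<mu> \<in> U (pert (\<lambda>_. -r) F)"
          then have "\<mu> + r \<in> U F" by (rule U_pert2) simp
          then have "ereal r \<le> ereal (\<mu> + r)" unfolding r[symmetric] by (auto intro: Inf_lower)
          then show "0 \<le> \<mu>" by simp
        qed
        then have "ereal (-r) \<in> S" unfolding S_def using sn_const[of "-r", where 'a='n] rneg
          by (intro CollectI exI[of _ "\<lambda>_. -r"]) auto
        then show "Inf S \<le> ereal (-r)" by (rule Inf_lower)
      next
        show "ereal (-r) \<le> Inf S" unfolding S_def
        proof (rule Inf_greatest, clarify)
          fix u :: "'n \<Rightarrow> real" assume f: "feasible (pert u F)"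
          have "ereal (- sup_norm u) \<le> Inf (ereal ` U F)"
          proof (rule Inf_greatest, clarify)
            fix \<mu> assume "\<mu> \<in> U F"
            then have "\<mu> + sup_norm u \<in> U (pert u F)" by (rule U_pert1) (simp add: sn_le1)
            then have "0 \<le> \<mu> + sup_norm u" using f fP by blast
            then show "ereal (- sup_norm u) \<le> ereal \<mu>" by simp
          qed
          then show "ereal (-r) \<le> ereal (sup_norm u)" using r by simp
        qed
      qed
      then show ?thesis using False r rneg by (simp add: cond_def cond_gen_def S_def[symmetric] uc)
    qed
  qed
qed

theorem mainTheorem1:
  fixes F :: "('n::finite \<Rightarrow> ereal) \<Rightarrow> ('n \<Rightarrow> ereal)"
  assumes "F ` trop_vecs \<subseteq> trop_vecs"
    and "continuous_on trop_vecs F"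
    and "order_preserving F"
    and "additively_homogeneous F"
  shows "cond_R F = inverse \<bar>lower_cw F\<bar> \<and> cond F = inverse \<bar>upper_cw F\<bar>"
proof -
  have g: "good F" using assms(1,3,4) unfolding good_def trop_vecs_def by blast
  show ?thesis using condR_part[OF g] cond_part[OF g cont_seqcont[OF assms(2)]] by simp
qed

end
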